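(* Consider the discrete first-price auction in the model with ties with $n=2$ bidders whose values are drawn independently and uniformly from $X=\{0,1,\dots,x\}$. There is no symmetric equilibrium $\beta$ with a value $v\in X$, $v\ge1$, and an integer $k\ge2$ such that $\beta(v-1)=\beta(v)-k$ and $\beta(v)\ge(2-\sqrt3)\,v$.
   Context: Model. Two risk-neutral bidders compete for one indivisible object. Values and bids lie in $X=\{0,1,2,\dots,x\}$; each bidder's value is drawn independently and uniformly from $X$. A (pure) strategy is a bidding function $\beta:X\to X$. In the model with ties, the higher bidder wins and, if the two bids are equal, each wins with probability $1/2$. In the first-price auction, a bidder with value $v_i$ bidding $b_i$ gets expected payoff $(v_i-b_i)\Pr(i\text{ wins})$. An equilibrium is a profile of bidding functions such that each bidder's bidding function maximises their expected payoff given the other's (a pure-strategy Bayes–Nash equilibrium) and such that no bidder uses a weakly dominated bidding function (a bidding function is weakly dominated if some other bidding function yields at least as high expected payoff against every opponent bidding function, and strictly higher against some). A symmetric equilibrium is an equilibrium in which both bidders use the same bidding function. *)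

theory Defs
  imports Complex_Main
begin

text \<open>A bidding function is a map
  nat => nat sending X into X (values outside X are irrelevant).\<close>

definition bidfun :: "nat \<Rightarrow> (nat \<Rightarrow> nat) \<Rightarrow> bool" where
  "bidfun x \<beta> \<longleftrightarrow> (\<forall>v\<in>{0..x}. \<beta> v \<in> {0..x})"

definition win_prob :: "nat \<Rightarrow> nat \<Rightarrow> (nat \<Rightarrow> nat) \<Rightarrow> real" where
  "win_prob x b \<beta>' =
     (\<Sum>w=0..x. (if \<beta>' w < b then 1 else if \<beta>' w = b then 1/2 else 0)) / real (x + 1)"

definition interim_payoff :: "nat \<Rightarrow> nat \<Rightarrow> nat \<Rightarrow> (nat \<Rightarrow> nat) \<Rightarrow> real" where
  "interim_payoff x v b \<beta>' = (real v - real b) * win_prob x b \<beta>'"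

definition exp_payoff :: "nat \<Rightarrow> (nat \<Rightarrow> nat) \<Rightarrow> (nat \<Rightarrow> nat) \<Rightarrow> real" where
  "exp_payoff x \<beta> \<beta>' = (\<Sum>v=0..x. interim_payoff x v (\<beta> v) \<beta>') / real (x + 1)"

definition best_response :: "nat \<Rightarrow> (nat \<Rightarrow> nat) \<Rightarrow> (nat \<Rightarrow> nat) \<Rightarrow> bool" where
  "best_response x \<beta> \<beta>' \<longleftrightarrow> bidfun x \<beta> \<and>
     (\<forall>\<gamma>. bidfun x \<gamma> \<longrightarrow> exp_payoff x \<gamma> \<beta>' \<le> exp_payoff x \<beta> \<beta>')"

definition weakly_dominated :: "nat \<Rightarrow> (nat \<Rightarrow> nat) \<Rightarrow> bool" where
  "weakly_dominated x \<beta> \<longleftrightarrow> (\<exists>\<gamma>. bidfun x \<gamma> \<and>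
     (\<forall>\<beta>'. bidfun x \<beta>' \<longrightarrow> exp_payoff x \<beta> \<beta>' \<le> exp_payoff x \<gamma> \<beta>') \<and>
     (\<exists>\<beta>'. bidfun x \<beta>' \<and> exp_payoff x \<beta> \<beta>' < exp_payoff x \<gamma> \<beta>'))"

definition equilibrium :: "nat \<Rightarrow> (nat \<Rightarrow> nat) \<Rightarrow> (nat \<Rightarrow> nat) \<Rightarrow> bool" where
  "equilibrium x \<beta>1 \<beta>2 \<longleftrightarrow> best_response x \<beta>1 \<beta>2 \<and> best_response x \<beta>2 \<beta>1 \<and>
     \<not> weakly_dominated x \<beta>1 \<and> \<not> weakly_dominated x \<beta>2"

definition symmetric_equilibrium :: "nat \<Rightarrow> (nat \<Rightarrow> nat) \<Rightarrow> bool" where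
  "symmetric_equilibrium x \<beta> \<longleftrightarrow> equilibrium x \<beta> \<beta>"

end

theory Submission
  imports Defs
begin

definition D :: "nat \<Rightarrow> (nat \<Rightarrow> nat) \<Rightarrow> nat \<Rightarrow> int" where
  "D x \<beta> b = (\<Sum>w=0..x. (if \<beta> w < b then 2 else if \<beta> w = b then 1 else 0))"

lemma win_prob_D: "win_prob x b \<beta> = real_of_int (D x \<beta> b) / (2 * real (x+1))"
proof -
  have "(\<Sum>w=0..x. (if \<beta> w < b then 1 else if \<beta> w = b then 1/2 else 0::real))
      = (\<Sum>w=0..x. real_of_int (if \<beta> w < b then 2 else if \<beta> w = b then 1 else 0) / 2)"
    by (rule sum.cong) auto
  also have "\<dots> = real_of_int (D x \<beta> b) / 2"
    unfolding D_def by (simp add: sum_divide_distrib)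
  finally have h: "(\<Sum>w=0..x. (if \<beta> w < b then 1 else if \<beta> w = b then 1/2 else 0::real)) = real_of_int (D x \<beta> b) / 2" .
  show ?thesis unfolding win_prob_def h by simp
qed

lemma count_sum: "(\<Sum>z\<in>A. (if P z then 1 else 0::int)) = int (card {z\<in>A. P z})" if "finite A"
proof -
  have "(\<Sum>z\<in>A. (if P z then 1 else 0::int)) = (\<Sum>z\<in>{z\<in>A. P z}. 1)"
    using that by (simp add: sum.inter_filter[symmetric])
  then show ?thesis by simp
qed

lemma D_card: "D x \<beta> b = 2 * int (card {z\<in>{0..x}. \<beta> z < b}) + int (card {z\<in>{0..x}. \<beta> z = b})"
proof -
  have "D x \<beta> b = (\<Sum>w=0..x. 2 * (if \<beta> w < b then 1 else 0) + (if \<beta> w = b then 1 else 0::int))"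
    unfolding D_def by (rule sum.cong) auto
  also have "\<dots> = 2 * (\<Sum>w=0..x. (if \<beta> w < b then 1 else 0::int)) + (\<Sum>w=0..x. (if \<beta> w = b then 1 else 0::int))"
    by (simp add: sum.distrib sum_distrib_left)
  finally show ?thesis by (simp add: count_sum)
qed

lemma opt:
  assumes br: "best_response x \<beta> \<beta>" and v: "v \<le> x" and c: "c \<le> x"
  shows "(int v - int c) * D x \<beta> c \<le> (int v - int (\<beta> v)) * D x \<beta> (\<beta> v)"
proof -
  define \<gamma> where "\<gamma> = \<beta>(v := c)"
  have bf: "bidfun x \<beta>" using br unfolding best_response_def by blast
  then have "bidfun x \<gamma>" using c unfolding bidfun_def \<gamma>_def by auto
  then have le: "exp_payoff x \<gamma> \<beta> \<le> exp_payoff x \<beta> \<beta>" using br unfolding best_response_def by blast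
  have fin: "finite {0..x}" by simp
  have vin: "v \<in> {0..x}" using v by simp
  have e1: "(\<Sum>w=0..x. interim_payoff x w (\<gamma> w) \<beta>) = interim_payoff x v c \<beta> + (\<Sum>w\<in>{0..x}-{v}. interim_payoff x w (\<beta> w) \<beta>)"
    using sum.remove[OF fin vin, of "\<lambda>w. interim_payoff x w (\<gamma> w) \<beta>"] by (simp add: \<gamma>_def)
  have e2: "(\<Sum>w=0..x. interim_payoff x w (\<beta> w) \<beta>) = interim_payoff x v (\<beta> v) \<beta> + (\<Sum>w\<in>{0..x}-{v}. interim_payoff x w (\<beta> w) \<beta>)"
    using sum.remove[OF fin vin] by simp
  have "interim_payoff x v c \<beta> \<le> interim_payoff x v (\<beta> v) \<beta>"
    using le e1 e2 unfolding exp_payoff_def by (simp add: divide_right_mono_neg del: atLeastAtMost_iff)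
      (smt (verit) divide_le_cancel of_nat_0_le_iff)
  then have "(real v - real c) * (real_of_int (D x \<beta> c) / (2 * real (x+1)))
     \<le> (real v - real (\<beta> v)) * (real_of_int (D x \<beta> (\<beta> v)) / (2 * real (x+1)))"
    unfolding interim_payoff_def win_prob_D .
  then have "(real v - real c) * real_of_int (D x \<beta> c) \<le> (real v - real (\<beta> v)) * real_of_int (D x \<beta> (\<beta> v))"
    by (simp add: divide_le_cancel)
  then have "real_of_int ((int v - int c) * D x \<beta> c) \<le> real_of_int ((int v - int (\<beta> v)) * D x \<beta> (\<beta> v))"
    by simp
  then show ?thesis by linarith
qed

lemma D_mono: "b \<le> b' \<Longrightarrow> D x \<beta> b \<le> D x \<beta> b'"
  unfolding D_def by (rule sum_mono) auto

lemma D_strict: assumes "w \<le> x" "\<beta> w < b" shows "D x \<beta> (\<beta> w) < D x \<beta> b"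
  unfolding D_def
proof (rule sum_strict_mono_ex1)
  show "\<exists>a\<in>{0..x}. (if \<beta> a < \<beta> w then 2 else if \<beta> a = \<beta> w then 1 else 0::int)
     < (if \<beta> a < b then 2 else if \<beta> a = b then 1 else 0)"
    using assms by (intro bexI[of _ w]) auto
qed (use assms in auto)

lemma mono_eq:
  assumes br: "best_response x \<beta> \<beta>" and "w < w'" "w' \<le> x"
  shows "\<beta> w \<le> \<beta> w'"
proof (rule ccontr)
  assume "\<not> ?thesis"
  then have lt: "\<beta> w' < \<beta> w" by simp
  have bf: "bidfun x \<beta>" using br unfolding best_response_def by blast
  have bx: "\<beta> w \<le> x" "\<beta> w' \<le> x" using bf assms unfolding bidfun_def by auto
  have i1: "(int w - int (\<beta> w')) * D x \<beta> (\<beta> w') \<le> (int w - int (\<beta> w)) * D x \<beta> (\<beta> w)"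
    using opt[OF br _ bx(2), of w] assms by simp
  have i2: "(int w' - int (\<beta> w)) * D x \<beta> (\<beta> w) \<le> (int w' - int (\<beta> w')) * D x \<beta> (\<beta> w')"
    using opt[OF br _ bx(1), of w'] assms by simp
  have "D x \<beta> (\<beta> w') < D x \<beta> (\<beta> w)" using D_strict[of w' x \<beta>, OF assms(3) lt] .
  then have "0 < (int w' - int w) * (D x \<beta> (\<beta> w) - D x \<beta> (\<beta> w'))"
    using assms by (intro mult_pos_pos) auto
  then show False using i1 i2 by (simp add: algebra_simps)
qed

lemma arith:
  fixes v b c p m A u k :: int
  assumes v: "v \<ge> 1" and c0: "c \<ge> 0" and ck: "c = b - k" and k: "k \<ge> 2" and p1: "p \<ge> 1"
    and m0: "m \<ge> 0" and A0: "A \<ge> 0" and Am: "A + m = v" and cA: "c = 0 \<Longrightarrow> A = 0" and u: "u \<ge> v + p - 1"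
    and I1: "(v-b+1)*(2*v) \<le> (v-b)*(2*v+p)"
    and I2: "(u-b-1)*(2*v+2*p) \<le> (u-b)*(2*v+p)"
    and I3: "(v-c-1)*(2*v) \<le> (v-b)*(2*v+p)"
    and I4: "(v-c)*(2*A+m) \<le> (v-b)*(2*v+p)"
    and I5: "(v-b)*(2*v) \<le> (v-1-c)*(2*A+m)"
  shows False
proof -
  define d where "d = v - b"
  have b: "b = v - d" using d_def by simp
  have J1: "2*v \<le> d*p" using I1 unfolding b by (simp add: algebra_simps)
  have dpos: "d > 0"
  proof (rule ccontr)
    assume "\<not> d > 0" then have "d*p \<le> 0" using p1 by (simp add: mult_nonpos_nonneg)
    then show False using J1 v by simp
  qed
  have J2: "(u-b)*p \<le> 2*v+2*p" using I2 by (simp add: algebra_simps)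
  have "(d+p-1)*p \<le> (u-b)*p" using u p1 unfolding b by (intro mult_right_mono) auto
  then have "(p-1)*p \<le> 2*p" using J1 J2 by (simp add: algebra_simps)
  moreover have "(0::int) < p" using p1 by simp
  ultimately have "p - 1 \<le> 2" by (rule mult_right_le_imp_le)
  then have p3: "p \<le> 3" by simp
  have p: "p = 3"
  proof -
    have "p = 1 \<or> p = 2 \<or> p = 3" using p1 p3 by auto
    moreover have "p \<noteq> 1"
    proof
      assume "p = 1" then have "2*v \<le> d" using J1 by simp
      then show False using b ck k c0 v by linarith
    qed
    moreover have "p \<noteq> 2"
    proof
      assume "p = 2" then have "2*v \<le> d*2" using J1 by simp
      then show False using b ck k c0 v by linarith
    qed
    ultimately show ?thesis by blast
  qed
  have "2*v \<le> d*3" "(u-b)*3 \<le> 2*v+6" "(d+2)*3 \<le> (u-b)*3" using J1 J2 p u \<open>(d+p-1)*p \<le> (u-b)*p\<close> by simp_all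
  then have e: "3*d = 2*v" by presburger
  have K3: "2*(k-1)*v \<le> 3*d" using I3 p ck unfolding b by (simp add: algebra_simps)
  have k2: "k = 2"
  proof (rule ccontr)
    assume "k \<noteq> 2" then have "k - 1 \<ge> 2" using k by simp
    then have "2*(k-1)*v \<ge> 2*2*v" using v by (intro mult_right_mono) auto
    then show False using K3 e v by simp
  qed
  have A: "A = v - m" using Am by simp
  have cb: "c = v - d - 2" using ck k2 b by simp
  have "(d+2)*(2*v-m) \<le> d*(2*v+3)" using I4 p unfolding A cb b by (simp add: algebra_simps)
  then have K4: "2*v \<le> (d+2)*m" using e by (simp add: algebra_simps)
  have "d*(2*v) \<le> (d+1)*(2*v-m)" using I5 unfolding A cb b by (simp add: algebra_simps)
  then have K5: "(d+1)*m \<le> 2*v" by (simp add: algebra_simps)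
  have m2: "m \<le> 2"
  proof (rule ccontr)
    assume "\<not> m \<le> 2" then have "(d+1)*m \<ge> (d+1)*3" using dpos by (intro mult_left_mono) auto
    then show False using K5 e by simp
  qed
  have "m = 0 \<or> m = 1 \<or> m = 2" using m0 m2 by auto
  then show False
  proof (elim disjE)
    assume "m = 0" then show False using K4 v by simp
  next
    assume "m = 1" then have "2*v \<le> d+2" using K4 by simp
    then show False using e dpos by presburger
  next
    assume m: "m = 2"
    then have "d \<le> 4" "d \<ge> 2" using K4 K5 e by simp_all
    then have "d = 2 \<or> d = 4" using e by presburger
    then show False using e b ck k2 c0 cA Am m by auto
  qed
qed

theorem lemma13:
  fixes x :: nat
  shows "\<not> (\<exists>\<beta> v (k::int). symmetric_equilibrium x \<beta> \<and> v \<in> {1..x} \<and> k \<ge> 2 \<and>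
            int (\<beta> (v - 1)) = int (\<beta> v) - k \<and>
            real (\<beta> v) \<ge> (2 - sqrt 3) * real v)"
proof
  assume "\<exists>\<beta> v (k::int). symmetric_equilibrium x \<beta> \<and> v \<in> {1..x} \<and> k \<ge> 2 \<and>
            int (\<beta> (v - 1)) = int (\<beta> v) - k \<and>
            real (\<beta> v) \<ge> (2 - sqrt 3) * real v"
  then obtain \<beta> v and k :: int where eq: "symmetric_equilibrium x \<beta>" and v: "1 \<le> v" "v \<le> x"
    and k: "k \<ge> 2" and hk: "int (\<beta> (v - 1)) = int (\<beta> v) - k" by auto
  have br: "best_response x \<beta> \<beta>" using eq unfolding symmetric_equilibrium_def equilibrium_def by blast
  have bf: "bidfun x \<beta>" using br unfolding best_response_def by blast
  define b where "b = \<beta> v"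
  define c where "c = \<beta> (v - 1)"
  have ck: "int c = int b - k" using hk unfolding b_def c_def .
  have cb: "c + 2 \<le> b" using ck k by linarith
  have bx: "b \<le> x" using bf v unfolding bidfun_def b_def by auto
  have low: "\<beta> z \<le> c" if "z < v" for z
  proof (cases "z = v - 1")
    case True then show ?thesis unfolding c_def by simp
  next
    case False then have "z < v - 1" using that by simp
    then show ?thesis unfolding c_def using mono_eq[OF br, of z "v-1"] v by simp
  qed
  have high: "b \<le> \<beta> z" if "v \<le> z" "z \<le> x" for z
  proof (cases "z = v")
    case True then show ?thesis unfolding b_def by simp
  next
    case False then show ?thesis unfolding b_def using mono_eq[OF br, of v z] that by simp
  qed
  have s1: "{z\<in>{0..x}. \<beta> z < c'} = {0..<v}" if "c < c'" "c' \<le> b" for c'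
  proof -
    have "z \<in> {0..<v}" if "z \<in> {0..x}" "\<beta> z < c'" for z
      using high[of z] that \<open>c' \<le> b\<close> by (cases "v \<le> z") auto
    moreover have "z \<in> {0..x} \<and> \<beta> z < c'" if "z \<in> {0..<v}" for z
      using low[of z] that \<open>c < c'\<close> v by auto
    ultimately show ?thesis by blast
  qed
  have s2: "{z\<in>{0..x}. \<beta> z = c'} = {}" if "c < c'" "c' < b" for c'
  proof -
    have False if "z \<le> x" "\<beta> z = c'" for z
      using high[of z] low[of z] that \<open>c < c'\<close> \<open>c' < b\<close> by (cases "v \<le> z") auto
    then show ?thesis by auto
  qed
  have Dmid: "D x \<beta> c' = 2 * int v" if "c < c'" "c' < b" for c'
    using D_card[of x \<beta> c'] s1[OF that(1)] s2[OF that] that by simp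
  define S where "S = {z\<in>{0..x}. \<beta> z = b}"
  define p where "p = card S"
  have Db: "D x \<beta> b = 2 * int v + int p"
    using D_card[of x \<beta> b] s1[of b] cb unfolding p_def S_def by simp
  have Sge: "S \<subseteq> {v..x}"
  proof
    fix z assume "z \<in> S"
    then have "z \<le> x" "\<beta> z = b" unfolding S_def by auto
    moreover have "v \<le> z" using low[of z] cb \<open>\<beta> z = b\<close> by (cases "z < v") auto
    ultimately show "z \<in> {v..x}" by simp
  qed
  have vS: "v \<in> S" unfolding S_def b_def using v by simp
  have finS: "finite S" unfolding S_def by simp
  have p1: "p \<ge> 1" using vS finS unfolding p_def by (simp add: Suc_le_eq card_gt_0_iff) blast
  have "{z\<in>{0..x}. \<beta> z < Suc b} = {z\<in>{0..x}. \<beta> z < b} \<union> S"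
    unfolding S_def by auto
  moreover have "{z\<in>{0..x}. \<beta> z < b} = {0..<v}" using s1[of b] cb by simp
  ultimately have "{z\<in>{0..x}. \<beta> z < Suc b} = {0..<v} \<union> S" by simp
  moreover have "{0..<v} \<inter> S = {}" using Sge by auto
  ultimately have "card {z\<in>{0..x}. \<beta> z < Suc b} = v + p"
    unfolding p_def using finS by (simp add: card_Un_disjoint)
  then have Db1: "D x \<beta> (Suc b) \<ge> 2 * int v + 2 * int p"
    using D_card[of x \<beta> "Suc b"] by simp
  have "\<exists>u\<in>S. v + p - 1 \<le> u"
  proof (rule ccontr)
    assume na: "\<not> (\<exists>u\<in>S. v + p - 1 \<le> u)"
    have "S \<subseteq> {v..<v+p-1}"
    proof
      fix z assume zS: "z \<in> S"
      then have "v \<le> z" using Sge by auto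
      moreover have "z < v+p-1" using na zS by (simp add: not_le)
      ultimately show "z \<in> {v..<v+p-1}" by simp
    qed
    then have "card S \<le> card {v..<v+p-1}" by (intro card_mono) auto
    then have "card S \<le> p - 1" by simp
    then show False using p1 unfolding p_def by simp
  qed
  then obtain u where u: "u \<in> S" "v + p - 1 \<le> u" by blast
  have ux: "u \<le> x" "\<beta> u = b" using u Sge unfolding S_def by auto
  define A where "A = card {z\<in>{0..x}. \<beta> z < c}"
  define m where "m = card {z\<in>{0..x}. \<beta> z = c}"
  have U: "{z\<in>{0..x}. \<beta> z < c} \<union> {z\<in>{0..x}. \<beta> z = c} = {0..<v}"
  proof (rule set_eqI)
    fix z
    show "z \<in> {z\<in>{0..x}. \<beta> z < c} \<union> {z\<in>{0..x}. \<beta> z = c} \<longleftrightarrow> z \<in> {0..<v}"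
    proof
      assume "z \<in> {z\<in>{0..x}. \<beta> z < c} \<union> {z\<in>{0..x}. \<beta> z = c}"
      then have "z \<le> x" "\<beta> z \<le> c" by auto
      then show "z \<in> {0..<v}" using high[of z] cb by (cases "v \<le> z") auto
    next
      assume "z \<in> {0..<v}"
      then have "z < v" by simp
      then have "\<beta> z \<le> c" "z \<le> x" using low[of z] v by auto
      then show "z \<in> {z\<in>{0..x}. \<beta> z < c} \<union> {z\<in>{0..x}. \<beta> z = c}" by auto
    qed
  qed
  have "card ({z\<in>{0..x}. \<beta> z < c} \<union> {z\<in>{0..x}. \<beta> z = c}) = A + m"
    unfolding A_def m_def by (rule card_Un_disjoint) auto
  then have Am: "A + m = v" using U by simp
  have Dc: "D x \<beta> c = 2 * int A + int m" using D_card[of x \<beta> c] unfolding A_def m_def .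
  have cA: "A = 0" if "c = 0" unfolding A_def that by simp
  have I1: "(int v - int b + 1) * (2 * int v) \<le> (int v - int b) * (2 * int v + int p)"
  proof -
    have "(int v - int (b-1)) * D x \<beta> (b-1) \<le> (int v - int b) * D x \<beta> b"
      using opt[OF br v(2), of "b-1"] bx unfolding b_def by simp
    moreover have "int v - (int b - 1) = int v - int b + 1" by simp
    ultimately show ?thesis using Dmid[of "b-1"] Db cb by (simp add: of_nat_diff)
  qed
  have J1: "2 * int v \<le> (int v - int b) * int p" using I1 by (simp add: algebra_simps)
  have dpos: "b < v"
  proof (rule ccontr)
    assume "\<not> b < v" then have "int v - int b \<le> 0" by simp
    then have "(int v - int b) * int p \<le> 0" by (simp add: mult_nonpos_nonneg)
    then show False using J1 v by simp
  qed
  have I2: "(int u - int b - 1) * (2 * int v + 2 * int p) \<le> (int u - int b) * (2 * int v + int p)"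
  proof -
    have h: "(int u - int (Suc b)) * D x \<beta> (Suc b) \<le> (int u - int b) * D x \<beta> b"
      using opt[OF br ux(1), of "Suc b"] bx dpos v ux by simp
    have e: "int u - int (Suc b) = int u - int b - 1" by simp
    have h2: "(int u - int b - 1) * D x \<beta> (Suc b) \<le> (int u - int b) * D x \<beta> b"
      using h unfolding e .
    have mo: "(int u - int b - 1) * (2 * int v + 2 * int p) \<le> (int u - int b - 1) * D x \<beta> (Suc b)"
      using Db1 u dpos p1 by (intro mult_left_mono) auto
    show ?thesis using order_trans[OF mo h2] Db by simp
  qed
  have I3: "(int v - int c - 1) * (2 * int v) \<le> (int v - int b) * (2 * int v + int p)"
  proof -
    have cx: "Suc c \<le> x" using cb bx by simp
    have e: "int v - int (Suc c) = int v - int c - 1" by simp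
    have h: "(int v - int c - 1) * D x \<beta> (Suc c) \<le> (int v - int b) * D x \<beta> b"
      using opt[OF br v(2) cx] unfolding e b_def .
    then show ?thesis using Dmid[of "Suc c"] Db cb by simp
  qed
  have I4: "(int v - int c) * (2 * int A + int m) \<le> (int v - int b) * (2 * int v + int p)"
    using opt[OF br v(2), of c] bx cb Dc Db unfolding b_def by simp
  have I5: "(int v - int b) * (2 * int v) \<le> (int v - 1 - int c) * (2 * int A + int m)"
  proof -
    have "(int (v-1) - int (b-1)) * D x \<beta> (b-1) \<le> (int (v-1) - int c) * D x \<beta> c"
      using opt[OF br _, of "v-1" "b-1"] bx v unfolding c_def by simp
    moreover have "int (v-1) - int (b-1) = int v - int b" using v cb by simp
    moreover have "int (v-1) - int c = int v - 1 - int c" using v by simp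
    ultimately have "(int v - int b) * D x \<beta> (b-1) \<le> (int v - 1 - int c) * D x \<beta> c" by simp
    then show ?thesis using Dmid[of "b-1"] Dc cb v by simp
  qed
  have "v + p \<le> u + 1" using u(2) p1 by simp
  then have uu: "int v + int p - 1 \<le> int u" by linarith
  show False
    using uu arith[where v="int v" and b="int b" and c="int c" and p="int p" and m="int m" and A="int A" and u="int u" and k=k, OF _ _ ck k]
      v p1 Am cA u I1 I2 I3 I4 I5 by (simp add: of_nat_diff)
qed

end
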